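(* Let $Z=(A,U)$ be the decision task with $A=[0,1]$ and $U(a,y)=1-(a-y)^2$. There exists an absolute constant $c>0$ such that for every $\varepsilon\in(0,10^{-100})$ and every randomized response function $r:[0,1]\to\Delta([0,1])$, there exists a distribution $\mathcal D$ on $[0,1]\times\{0,1\}$ with $\mathsf{Cutoff}(\mathcal D)=\varepsilon$ and $\mathsf{SR}_Z(r,\mathcal D)\ge c\,\varepsilon^{2/3}$.
   Context: For a distribution $\mathcal D$ of $(p,y)\in[0,1]\times\{0,1\}$, the cutoff calibration error is $\mathsf{Cutoff}(\mathcal D)=\sup_{0\le a\le b\le1}\big|\mathbb E_{(p,y)\sim\mathcal D}[(y-p)\mathbb I[a\le p\le b]]\big|$. For a randomized response function $r:[0,1]\to\Delta(A)$, the swap regret is $\mathsf{SR}_Z(r,\mathcal D)=\sup_{\sigma:A\to A}\mathbb E_{(p,y)\sim\mathcal D,\,a\sim r(p)}[U(\sigma(a),y)-U(a,y)]$. *)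

theory Defs
  imports "HOL-Probability.Probability"
begin

definition sqU :: "real \<Rightarrow> bool \<Rightarrow> real" where
  "sqU a y = 1 - (a - of_bool y)^2"

text \<open>A distribution on [0,1] x {0,1} (discrete, given as a pmf; bool encodes {0,1}).\<close>
definition valid_dist :: "(real \<times> bool) pmf \<Rightarrow> bool" where
  "valid_dist D \<longleftrightarrow> set_pmf D \<subseteq> {0..1} \<times> UNIV"

definition cutoff_err :: "(real \<times> bool) pmf \<Rightarrow> real" where
  "cutoff_err D = Sup {\<bar>measure_pmf.expectation D
        (\<lambda>(p,y). (of_bool y - p) * of_bool (a \<le> p \<and> p \<le> b))\<bar> | a b.
        0 \<le> a \<and> a \<le> b \<and> b \<le> (1::real)}"

definition valid_response :: "(real \<Rightarrow> real measure) \<Rightarrow> bool" where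
  "valid_response r \<longleftrightarrow> (\<forall>p\<in>{0..1}. prob_space (r p) \<and> sets (r p) = sets borel
      \<and> measure (r p) {0..1} = 1)"

definition swap_regret ::
  "(real \<Rightarrow> bool \<Rightarrow> real) \<Rightarrow> (real \<Rightarrow> real measure) \<Rightarrow> (real \<times> bool) pmf \<Rightarrow> real" where
  "swap_regret U r D = Sup {measure_pmf.expectation D
        (\<lambda>(p,y). \<integral>a. (U (\<sigma> a) y - U a y) \<partial>(r p)) | \<sigma>.
        \<sigma> \<in> borel_measurable borel \<and> (\<forall>a\<in>{0..1}. \<sigma> a \<in> {0..1})}"

end

theory Submission
  imports Defs
begin

lemma integral_bind_pmf_fin:
  fixes f :: "'b \<Rightarrow> real"
  assumes fin: "finite (set_pmf M)" and finN: "\<And>x. x \<in> set_pmf M \<Longrightarrow> finite (set_pmf (N x))"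
  shows "measure_pmf.expectation (bind_pmf M N) f
       = measure_pmf.expectation M (\<lambda>x. measure_pmf.expectation (N x) f)"
proof -
  define A where "A = set_pmf (bind_pmf M N)"
  have finA: "finite A" using fin finN by (auto simp: A_def)
  have sub: "set_pmf (N x) \<subseteq> A" if "x \<in> set_pmf M" for x using that by (auto simp: A_def)
  have pb: "pmf (bind_pmf M N) a = (\<Sum>x\<in>set_pmf M. pmf (N x) a * pmf M x)" for a
    unfolding pmf_bind by (rule integral_measure_pmf_real[OF fin]) (auto simp: set_pmf_iff)
  have "measure_pmf.expectation (bind_pmf M N) f = (\<Sum>a\<in>A. f a * pmf (bind_pmf M N) a)"
    by (rule integral_measure_pmf_real[OF finA]) (auto simp: A_def)
  also have "\<dots> = (\<Sum>a\<in>A. \<Sum>x\<in>set_pmf M. f a * pmf (N x) a * pmf M x)"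
    by (simp add: pb sum_distrib_left mult.assoc)
  also have "\<dots> = (\<Sum>x\<in>set_pmf M. \<Sum>a\<in>A. f a * pmf (N x) a * pmf M x)"
    by (rule sum.swap)
  also have "\<dots> = (\<Sum>x\<in>set_pmf M. measure_pmf.expectation (N x) f * pmf M x)"
  proof (rule sum.cong[OF refl])
    fix x assume x: "x \<in> set_pmf M"
    have "measure_pmf.expectation (N x) f = (\<Sum>a\<in>A. f a * pmf (N x) a)"
      by (rule integral_measure_pmf_real[OF finA]) (use sub[OF x] in auto)
    then show "(\<Sum>a\<in>A. f a * pmf (N x) a * pmf M x) = measure_pmf.expectation (N x) f * pmf M x"
      by (simp add: sum_distrib_right)
  qed
  also have "\<dots> = measure_pmf.expectation M (\<lambda>x. measure_pmf.expectation (N x) f)"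
    by (rule integral_measure_pmf_real[OF fin, symmetric]) auto
  finally show ?thesis .
qed

definition mkD :: "real \<Rightarrow> nat \<Rightarrow> (nat \<Rightarrow> real) \<Rightarrow> (nat \<Rightarrow> real) \<Rightarrow> real \<times> bool \<Rightarrow> (real \<times> bool) pmf" where
  "mkD q n pt mu x0 = bind_pmf (bernoulli_pmf q) (\<lambda>b. if b then
      bind_pmf (pmf_of_set {..<n}) (\<lambda>i. map_pmf (\<lambda>y. (pt i, y)) (bernoulli_pmf (mu i)))
      else return_pmf x0)"

lemma mkD_set:
  assumes "0 < n"
  shows "set_pmf (mkD q n pt mu x0) \<subseteq> {(pt i, y) | i y. i < n} \<union> {x0}"
proof -
  have s: "set_pmf (pmf_of_set {..<n}) = {..<n}" by (rule set_pmf_of_set) (use assms in auto)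
  show ?thesis by (auto simp: mkD_def s split: if_splits)
qed

lemma mkD_finite:
  assumes "0 < n"
  shows "finite (set_pmf (mkD q n pt mu x0))"
proof -
  have e: "{(pt i, y) | i y. i < n} = (\<lambda>(i,y). (pt i, y)) ` ({..<n} \<times> (UNIV::bool set))" by auto
  have "finite {(pt i, y::bool) | i y. i < n}" by (subst e) (rule finite_imageI, simp)
  then show ?thesis using mkD_set[OF assms] by (meson finite_Un finite_insert finite.emptyI finite_subset)
qed

lemma mkD_expect:
  fixes f :: "real \<times> bool \<Rightarrow> real"
  assumes n: "0 < n" and q: "0 \<le> q" "q \<le> 1" and mu: "\<And>i. i < n \<Longrightarrow> 0 \<le> mu i \<and> mu i \<le> 1"
  shows "measure_pmf.expectation (mkD q n pt mu x0) f
     = q * (\<Sum>i<n. mu i * f (pt i, True) + (1 - mu i) * f (pt i, False)) / n + (1 - q) * f x0"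
proof -
  have fin1: "finite (set_pmf (bind_pmf (pmf_of_set {..<n}) (\<lambda>i. map_pmf (\<lambda>y. (pt i, y)) (bernoulli_pmf (mu i)))))"
    using n by (auto simp: set_pmf_of_set lessThan_empty_iff)
  have s: "set_pmf (pmf_of_set {..<n}) = {..<n}" by (rule set_pmf_of_set) (use n in auto)
  have e1: "measure_pmf.expectation (bind_pmf (pmf_of_set {..<n}) (\<lambda>i. map_pmf (\<lambda>y. (pt i, y)) (bernoulli_pmf (mu i)))) f
      = (\<Sum>i<n. mu i * f (pt i, True) + (1 - mu i) * f (pt i, False)) / n"
  proof -
    have b: "measure_pmf.expectation (bernoulli_pmf (mu i)) (\<lambda>y. f (pt i, y)) = mu i * f (pt i, True) + (1 - mu i) * f (pt i, False)"
      if "i < n" for i using mu[OF that] by (simp add: mult.commute)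
    have "measure_pmf.expectation (pmf_of_set {..<n}) (\<lambda>i. measure_pmf.expectation (bernoulli_pmf (mu i)) (\<lambda>y. f (pt i, y)))
       = (\<Sum>i<n. measure_pmf.expectation (bernoulli_pmf (mu i)) (\<lambda>y. f (pt i, y))) / n"
      by (subst integral_pmf_of_set) (use n in auto)
    also have "\<dots> = (\<Sum>i<n. mu i * f (pt i, True) + (1 - mu i) * f (pt i, False)) / n"
      using b by simp
    finally show ?thesis by (subst integral_bind_pmf_fin) (auto simp: s)
  qed
  show ?thesis unfolding mkD_def
    apply (subst integral_bind_pmf_fin)
    using fin1 q e1 by (auto simp: set_pmf_bernoulli)
qed


lemma resp_prob: "valid_response r \<Longrightarrow> p \<in> {0..1} \<Longrightarrow> prob_space (r p)"
  by (simp add: valid_response_def)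

lemma resp_AE: assumes "valid_response r" "p \<in> {0..1}" shows "AE a in r p. a \<in> {0..1}"
proof -
  interpret prob_space "r p" using assms by (simp add: valid_response_def)
  show ?thesis by (rule AE_prob_1) (use assms in \<open>simp add: valid_response_def\<close>)
qed

lemma resp_meas: assumes "valid_response r" "p \<in> {0..1}" "h \<in> borel_measurable borel"
  shows "h \<in> borel_measurable (r p)"
proof -
  have "sets (r p) = sets borel" using assms by (simp add: valid_response_def)
  then show ?thesis using assms(3) measurable_cong_sets by blast
qed

lemma resp_integrable:
  fixes h :: "real \<Rightarrow> real"
  assumes "valid_response r" "p \<in> {0..1}" "h \<in> borel_measurable borel" "\<And>a. a \<in> {0..1} \<Longrightarrow> \<bar>h a\<bar> \<le> B"
  shows "integrable (r p) h"
proof -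
  interpret prob_space "r p" using assms by (simp add: valid_response_def)
  have ae: "AE a in r p. norm (h a) \<le> B"
    using resp_AE[OF assms(1,2)] by eventually_elim (use assms(4) in simp)
  show ?thesis
    by (rule integrable_const_bound[OF ae]) (rule resp_meas[OF assms(1,2,3)])
qed

lemma resp_mono:
  fixes h g :: "real \<Rightarrow> real"
  assumes "valid_response r" "p \<in> {0..1}" "h \<in> borel_measurable borel" "\<And>a. a \<in> {0..1} \<Longrightarrow> \<bar>h a\<bar> \<le> B"
    "g \<in> borel_measurable borel" "\<And>a. a \<in> {0..1} \<Longrightarrow> \<bar>g a\<bar> \<le> B'"
    "\<And>a. a \<in> {0..1} \<Longrightarrow> g a \<le> h a"
  shows "integral\<^sup>L (r p) g \<le> integral\<^sup>L (r p) h"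
proof (rule integral_mono_AE)
  show "integrable (r p) g" by (rule resp_integrable[OF assms(1,2,5,6)])
  show "integrable (r p) h" by (rule resp_integrable[OF assms(1,2,3,4)])
  show "AE a in r p. g a \<le> h a"
    using resp_AE[OF assms(1,2)] by eventually_elim (rule assms(7))
qed

definition admissible :: "(real \<Rightarrow> real) \<Rightarrow> bool" where
  "admissible \<sigma> \<longleftrightarrow> \<sigma> \<in> borel_measurable borel \<and> (\<forall>a\<in>{0..1}. \<sigma> a \<in> {0..1})"

lemma sqU_meas0: "\<sigma> \<in> borel_measurable borel \<Longrightarrow> (\<lambda>a. (1 - (\<sigma> a - c)^2) - (1 - (a - c)^2)) \<in> borel_measurable borel"
  for c :: real
proof -
  assume m: "\<sigma> \<in> borel_measurable borel"
  have i: "(\<lambda>x::real. x) \<in> borel_measurable borel" by simp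
  show ?thesis
    by (intro borel_measurable_diff borel_measurable_power borel_measurable_const m i)
qed

lemma sqU_meas: "\<sigma> \<in> borel_measurable borel \<Longrightarrow> (\<lambda>a. sqU (\<sigma> a) y - sqU a y) \<in> borel_measurable borel"
  unfolding sqU_def by (rule sqU_meas0)

lemma L1: "0 \<le> u \<Longrightarrow> u \<le> 1 \<Longrightarrow> 0 \<le> v \<Longrightarrow> v \<le> 1 \<Longrightarrow> \<bar>u * u - v * v\<bar> \<le> (1::real)"
  unfolding abs_le_iff using mult_le_one[of u u] mult_le_one[of v v] mult_nonneg_nonneg[of u u] mult_nonneg_nonneg[of v v]
  by linarith

lemma sqU_bound: "a \<in> {0..1} \<Longrightarrow> s \<in> {0..1} \<Longrightarrow> \<bar>sqU s y - sqU a y\<bar> \<le> 1"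
proof (cases y)
  case True
  assume "a \<in> {0..1}" "s \<in> {0..1}"
  moreover have "sqU s y - sqU a y = (1 - a) * (1 - a) - (1 - s) * (1 - s)"
    using True by (simp add: sqU_def power2_eq_square algebra_simps)
  ultimately show ?thesis using L1[of "1 - a" "1 - s"] by simp
next
  case False
  assume "a \<in> {0..1}" "s \<in> {0..1}"
  moreover have "sqU s y - sqU a y = a * a - s * s"
    using False by (simp add: sqU_def power2_eq_square algebra_simps)
  ultimately show ?thesis using L1[of a s] by simp
qed

lemma sqU_gain: "mu * (sqU s True - sqU a True) + (1 - mu) * (sqU s False - sqU a False) = (a - mu)^2 - (s - mu)^2"
  unfolding sqU_def by (simp add: algebra_simps power2_eq_square)

definition gg :: "(real \<Rightarrow> real) \<Rightarrow> (real \<Rightarrow> real measure) \<Rightarrow> real \<Rightarrow> bool \<Rightarrow> real" where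
  "gg \<sigma> r p y = (\<integral>a. (sqU (\<sigma> a) y - sqU a y) \<partial>(r p))"

lemma gg_pair:
  assumes r: "valid_response r" and p: "p \<in> {0..1}" and s: "admissible \<sigma>"
  shows "mu * gg \<sigma> r p True + (1 - mu) * gg \<sigma> r p False = (\<integral>a. ((a - mu)^2 - (\<sigma> a - mu)^2) \<partial>(r p))"
proof -
  have i: "integrable (r p) (\<lambda>a. sqU (\<sigma> a) y - sqU a y)" for y
    by (rule resp_integrable[OF r p, where B=1]) (use s in \<open>auto simp: admissible_def intro!: sqU_meas sqU_bound\<close>)
  have "mu * gg \<sigma> r p True + (1 - mu) * gg \<sigma> r p False
     = (\<integral>a. mu * (sqU (\<sigma> a) True - sqU a True) + (1 - mu) * (sqU (\<sigma> a) False - sqU a False) \<partial>(r p))"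
  proof -
    have "(\<integral>a. mu * (sqU (\<sigma> a) True - sqU a True) + (1 - mu) * (sqU (\<sigma> a) False - sqU a False) \<partial>(r p))
      = (\<integral>a. mu * (sqU (\<sigma> a) True - sqU a True) \<partial>(r p)) + (\<integral>a. (1 - mu) * (sqU (\<sigma> a) False - sqU a False) \<partial>(r p))"
      by (rule Bochner_Integration.integral_add) (use i in \<open>auto intro!: integrable_mult_right\<close>)
    then show ?thesis unfolding gg_def by simp
  qed
  also have "\<dots> = (\<integral>a. ((a - mu)^2 - (\<sigma> a - mu)^2) \<partial>(r p))" by (simp add: sqU_gain)
  finally show ?thesis .
qed

lemma gg_le: 
  assumes r: "valid_response r" and p: "p \<in> {0..1}" and s: "admissible \<sigma>"
  shows "gg \<sigma> r p y \<le> 1" "gg \<sigma> r p y \<ge> -1"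
proof -
  interpret prob_space "r p" using r p by (simp add: valid_response_def)
  have m: "(\<lambda>a. sqU (\<sigma> a) y - sqU a y) \<in> borel_measurable borel" using s by (auto simp: admissible_def intro!: sqU_meas)
  have b: "\<bar>sqU (\<sigma> a) y - sqU a y\<bar> \<le> 1" if "a \<in> {0..1}" for a using s that by (auto simp: admissible_def intro!: sqU_bound)
  have "gg \<sigma> r p y \<le> integral\<^sup>L (r p) (\<lambda>a. 1)" unfolding gg_def
    by (rule resp_mono[OF r p, where B=1 and B'=1]) (use m b in \<open>auto simp: abs_le_iff\<close>)
  then show "gg \<sigma> r p y \<le> 1" using prob_space by simp
  have b2: "-1 \<le> sqU (\<sigma> a) y - sqU a y" if "a \<in> {0..1}" for a using b[OF that] by linarith
  have "integral\<^sup>L (r p) (\<lambda>a. -1) \<le> gg \<sigma> r p y" unfolding gg_def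
    by (rule resp_mono[OF r p, where B=1 and B'=1]) (use m b b2 in \<open>auto simp: abs_le_iff\<close>)
  then show "gg \<sigma> r p y \<ge> -1" using prob_space by simp
qed

lemma gg_pair_le:
  assumes r: "valid_response r" and p: "p \<in> {0..1}" and s: "admissible \<sigma>" and mu: "0 \<le> mu" "mu \<le> 1"
  shows "mu * gg \<sigma> r p True + (1 - mu) * gg \<sigma> r p False \<le> 1"
proof -
  have "mu * gg \<sigma> r p True \<le> mu * 1" by (rule mult_left_mono) (use gg_le[OF r p s] mu in auto)
  moreover have "(1 - mu) * gg \<sigma> r p False \<le> (1 - mu) * 1" by (rule mult_left_mono) (use gg_le[OF r p s] mu in auto)
  ultimately show ?thesis by simp
qed


lemma SR_lower:
  assumes r: "valid_response r" and n: "0 < n" and q: "0 \<le> q" "q \<le> 1"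
    and mu: "\<And>i. i < n \<Longrightarrow> 0 \<le> mu i \<and> mu i \<le> 1" and pt: "\<And>i. i < n \<Longrightarrow> pt i \<in> {0..1}"
    and x0: "fst x0 \<in> {0..1}" and s: "admissible \<sigma>"
  shows "swap_regret sqU r (mkD q n pt mu x0) \<ge>
     q * (\<Sum>i<n. \<integral>a. ((a - mu i)^2 - (\<sigma> a - mu i)^2) \<partial>(r (pt i))) / n + (1 - q) * gg \<sigma> r (fst x0) (snd x0)"
proof -
  let ?D = "mkD q n pt mu x0"
  let ?E = "\<lambda>\<sigma>. measure_pmf.expectation ?D (\<lambda>(p,y). \<integral>a. (sqU (\<sigma> a) y - sqU a y) \<partial>(r p))"
  have E: "?E \<sigma> = q * (\<Sum>i<n. mu i * gg \<sigma> r (pt i) True + (1 - mu i) * gg \<sigma> r (pt i) False) / n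
                + (1 - q) * gg \<sigma> r (fst x0) (snd x0)" for \<sigma>
  proof -
    note E0 = mkD_expect[OF n q mu, where pt=pt and ?x0.0=x0 and f="\<lambda>(p,y). \<integral>a. (sqU (\<sigma> a) y - sqU a y) \<partial>(r p)"]
    from E0 show ?thesis by (simp only: gg_def case_prod_beta fst_conv snd_conv)
  qed
  have bdd: "bdd_above {?E \<sigma> | \<sigma>. \<sigma> \<in> borel_measurable borel \<and> (\<forall>a\<in>{0..1}. \<sigma> a \<in> {0..1})}"
  proof (rule bdd_aboveI[where M=1], clarify)
    fix \<sigma> :: "real \<Rightarrow> real" assume "\<sigma> \<in> borel_measurable borel" "\<forall>a\<in>{0..1}. \<sigma> a \<in> {0..1}"
    then have s': "admissible \<sigma>" by (simp add: admissible_def)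
    have "(\<Sum>i<n. mu i * gg \<sigma> r (pt i) True + (1 - mu i) * gg \<sigma> r (pt i) False) \<le> (\<Sum>i<n. 1)"
      by (rule sum_mono) (use gg_pair_le[OF r pt s'] mu in auto)
    then have "q * (\<Sum>i<n. mu i * gg \<sigma> r (pt i) True + (1 - mu i) * gg \<sigma> r (pt i) False) \<le> q * n"
      using q by (simp add: mult_left_mono)
    then have a1: "q * (\<Sum>i<n. mu i * gg \<sigma> r (pt i) True + (1 - mu i) * gg \<sigma> r (pt i) False) / n \<le> q"
      using n by (simp add: pos_divide_le_eq mult.commute)
    have a2: "(1 - q) * gg \<sigma> r (fst x0) (snd x0) \<le> (1 - q) * 1"
      by (rule mult_left_mono) (use gg_le[OF r x0 s'] q in auto)
    show "?E \<sigma> \<le> 1" unfolding E using a1 a2 by simp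
  qed
  have "?E \<sigma> \<le> swap_regret sqU r ?D" unfolding swap_regret_def
    by (rule cSup_upper[OF _ bdd]) (use s in \<open>auto simp: admissible_def\<close>)
  moreover have "?E \<sigma> = q * (\<Sum>i<n. \<integral>a. ((a - mu i)^2 - (\<sigma> a - mu i)^2) \<partial>(r (pt i))) / n + (1 - q) * gg \<sigma> r (fst x0) (snd x0)"
    unfolding E using gg_pair[OF r pt s] by simp
  ultimately show ?thesis by simp
qed

lemma cutoff_eq:
  assumes le: "\<And>a b. 0 \<le> a \<Longrightarrow> a \<le> b \<Longrightarrow> b \<le> 1 \<Longrightarrow>
     \<bar>measure_pmf.expectation D (\<lambda>(p,y). (of_bool y - p) * of_bool (a \<le> p \<and> p \<le> b))\<bar> \<le> e"
  and att: "0 \<le> a0" "a0 \<le> b0" "b0 \<le> 1"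
     "\<bar>measure_pmf.expectation D (\<lambda>(p,y). (of_bool y - p) * of_bool (a0 \<le> p \<and> p \<le> b0))\<bar> = e"
  shows "cutoff_err D = e"
  unfolding cutoff_err_def
proof (rule cSup_eq_maximum)
  show "e \<in> {\<bar>measure_pmf.expectation D (\<lambda>(p,y). (of_bool y - p) * of_bool (a \<le> p \<and> p \<le> b))\<bar> | a b.
        0 \<le> a \<and> a \<le> b \<and> b \<le> (1::real)}"
    unfolding mem_Collect_eq by (intro exI[of _ a0] exI[of _ b0]) (use att in auto)
next
  fix x assume "x \<in> {\<bar>measure_pmf.expectation D (\<lambda>(p,y). (of_bool y - p) * of_bool (a \<le> p \<and> p \<le> b))\<bar> | a b.
        0 \<le> a \<and> a \<le> b \<and> b \<le> (1::real)}"
  then obtain a b where "0 \<le> a" "a \<le> b" "b \<le> 1"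
    "x = \<bar>measure_pmf.expectation D (\<lambda>(p,y). (of_bool y - p) * of_bool (a \<le> p \<and> p \<le> b))\<bar>" by blast
  then show "x \<le> e" using le by simp
qed


definition ptf :: "real \<Rightarrow> nat \<Rightarrow> real" where "ptf h i = 1/4 + (real i + 1/2) * h"
definition muf :: "real \<Rightarrow> nat \<Rightarrow> real" where "muf h i = ptf h i + (-1)^i / 4"
definition sgf :: "real \<Rightarrow> real \<Rightarrow> real" where
  "sgf h a = (if 1/4 \<le> a \<and> a < 3/4 then muf h (nat \<lfloor>(a - 1/4) / h\<rfloor>) else a)"

lemma floor_facts:
  fixes x :: real assumes "0 \<le> x"
  shows "real (nat \<lfloor>x\<rfloor>) \<le> x" "x < real (nat \<lfloor>x\<rfloor>) + 1"
proof -
  have "0 \<le> \<lfloor>x\<rfloor>" using assms by simp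
  then have e: "real (nat \<lfloor>x\<rfloor>) = real_of_int \<lfloor>x\<rfloor>" by simp
  show "real (nat \<lfloor>x\<rfloor>) \<le> x" unfolding e by (rule of_int_floor_le)
  show "x < real (nat \<lfloor>x\<rfloor>) + 1" unfolding e by (rule real_of_int_floor_add_one_gt)
qed

lemma cell:
  assumes h: "0 < h" and hn: "h * real n = 1/2" and a: "1/4 \<le> a" "a < 3/4"
  shows "nat \<lfloor>(a - 1/4) / h\<rfloor> < n"
    "ptf h (nat \<lfloor>(a - 1/4) / h\<rfloor>) - h/2 \<le> a" "a < ptf h (nat \<lfloor>(a - 1/4) / h\<rfloor>) + h/2"
proof -
  define x where "x = (a - 1/4) / h"
  have x0: "0 \<le> x" using a h by (simp add: x_def)
  have ax: "a = 1/4 + x * h" using h by (simp add: x_def)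
  have xn: "x < real n" using a h hn by (simp add: x_def divide_less_eq) (simp add: mult.commute)
  note f = floor_facts[OF x0]
  show "nat \<lfloor>(a - 1/4) / h\<rfloor> < n" using f xn unfolding x_def[symmetric] by linarith
  have "real (nat \<lfloor>x\<rfloor>) * h \<le> x * h" using f(1) h by (simp add: mult_right_mono)
  then show "ptf h (nat \<lfloor>(a - 1/4) / h\<rfloor>) - h/2 \<le> a"
    unfolding x_def[symmetric] ptf_def ax by (simp add: algebra_simps)
  have "x * h < (real (nat \<lfloor>x\<rfloor>) + 1) * h" using f(2) h by (simp add: mult_strict_right_mono)
  then show "a < ptf h (nat \<lfloor>(a - 1/4) / h\<rfloor>) + h/2"
    unfolding x_def[symmetric] ptf_def ax using h by (simp add: algebra_simps)
qed

lemma ptf_range: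
  assumes h: "0 < h" and hn: "h * real n = 1/2" and i: "i < n"
  shows "1/4 + h/2 \<le> ptf h i" "ptf h i \<le> 3/4 - h/2"
proof -
  have "real i + 1 \<le> real n" using i by simp
  then have "(real i + 1) * h \<le> real n * h" using h by (simp add: mult_right_mono)
  then show "ptf h i \<le> 3/4 - h/2" using hn unfolding ptf_def by (simp add: algebra_simps)
  show "1/4 + h/2 \<le> ptf h i" using h unfolding ptf_def by (simp add: algebra_simps)
qed

lemma muf_range:
  assumes h: "0 < h" and hn: "h * real n = 1/2" and i: "i < n"
  shows "0 \<le> muf h i" "muf h i \<le> 1"
proof -
  have "(-1::real)^i = 1 \<or> (-1::real)^i = -1" by (cases "even i") auto
  then show "0 \<le> muf h i" "muf h i \<le> 1" using ptf_range[OF h hn i] h unfolding muf_def by auto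
qed

lemma sgf_range:
  assumes h: "0 < h" and hn: "h * real n = 1/2" and a: "0 \<le> a" "a \<le> 1"
  shows "0 \<le> sgf h a" "sgf h a \<le> 1"
  using muf_range[OF h hn cell(1)[OF h hn]] a unfolding sgf_def by auto

lemma far:
  assumes h: "0 < h" and hn: "h * real n = 1/2" and i: "i < n"
    and nc: "\<not> (1/4 \<le> a \<and> a < 3/4 \<and> nat \<lfloor>(a - 1/4) / h\<rfloor> = i)"
  shows "h/2 \<le> \<bar>a - ptf h i\<bar>"
proof (cases "1/4 \<le> a \<and> a < 3/4")
  case False
  then have "a < 1/4 \<or> 3/4 \<le> a" by auto
  then show ?thesis using ptf_range[OF h hn i] by (auto simp: abs_if)
next
  case True
  define j where "j = nat \<lfloor>(a - 1/4) / h\<rfloor>"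
  have ji: "j \<noteq> i" using nc True by (simp add: j_def)
  note c = cell[OF h hn, of a, folded j_def]
  show ?thesis
  proof (cases "j < i")
    case True
    then have "real j + 1 \<le> real i" by simp
    then have "(real j + 1) * h \<le> real i * h" using h by (simp add: mult_right_mono)
    then show ?thesis using c \<open>1/4 \<le> a \<and> a < 3/4\<close> unfolding ptf_def by (simp add: algebra_simps abs_if)
  next
    case False
    then have "real i + 1 \<le> real j" using ji by simp
    then have "(real i + 1) * h \<le> real j * h" using h by (simp add: mult_right_mono)
    then show ?thesis using c \<open>1/4 \<le> a \<and> a < 3/4\<close> unfolding ptf_def by (simp add: algebra_simps abs_if)
  qed
qed

lemma gain_i:
  assumes h: "0 < h" "h \<le> 1" and hn: "h * real n = 1/2" and i: "i < n" and a: "0 \<le> a" "a \<le> 1"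
  shows "1/32 - 5 / h^2 * (a - ptf h i)^2 \<le> (a - muf h i)^2 - (sgf h a - muf h i)^2"
proof (cases "1/4 \<le> a \<and> a < 3/4 \<and> nat \<lfloor>(a - 1/4) / h\<rfloor> = i")
  case True
  then have s: "sgf h a = muf h i" by (simp add: sgf_def)
  define x where "x = a - ptf h i"
  define d where "d = ((-1::real)^i) / 4"
  have d2: "d^2 = 1/16" by (simp add: d_def power_divide flip: power_mult) 
  have am: "a - muf h i = x - d" by (simp add: x_def d_def muf_def)
  have h2: "h^2 \<le> 1" using h by (simp add: power_le_one)
  have h2p: "0 < h^2" using h by simp
  have K: "1 \<le> 5 / h^2" using h2 h2p by (simp add: field_simps)
  have "x^2 \<le> 5 / h^2 * x^2" using mult_right_mono[OF K zero_le_power2[of x]] by simp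
  moreover have "d^2 / 2 - x^2 \<le> (x - d)^2"
  proof -
    have "(x - d)^2 = 2 * (x - d/2)^2 - x^2 + d^2/2" by (simp add: power2_eq_square algebra_simps)
    moreover have "0 \<le> (x - d/2)^2" by simp
    ultimately show ?thesis by linarith
  qed
  ultimately show ?thesis unfolding s am x_def[symmetric] using d2 by simp
next
  case False
  have fa: "h/2 \<le> \<bar>a - ptf h i\<bar>" by (rule far[OF h(1) hn i False])
  have "(h/2)^2 \<le> \<bar>a - ptf h i\<bar>^2" by (rule power_mono[OF fa]) (use h in simp)
  then have "(h/2)^2 \<le> (a - ptf h i)^2" by simp
  then have "5 / h^2 * (h/2)^2 \<le> 5 / h^2 * (a - ptf h i)^2" by (rule mult_left_mono) simp
  moreover have "5 / h^2 * (h/2)^2 = 5/4" using h by (simp add: field_simps power2_eq_square)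
  ultimately have A: "5/4 \<le> 5 / h^2 * (a - ptf h i)^2" by simp
  have "0 \<le> sgf h a" "sgf h a \<le> 1" using sgf_range[OF h(1) hn a] by auto
  moreover have "0 \<le> muf h i" "muf h i \<le> 1" using muf_range[OF h(1) hn i] by auto
  ultimately have "\<bar>sgf h a - muf h i\<bar> \<le> 1" by (simp add: abs_le_iff)
  then have "\<bar>sgf h a - muf h i\<bar>^2 \<le> 1^2" by (rule power_mono) simp
  then have "(sgf h a - muf h i)^2 \<le> 1" by simp
  moreover have "0 \<le> (a - muf h i)^2" by simp
  ultimately show ?thesis using A by linarith
qed

lemma gain_0:
  assumes h: "0 < h" and hn: "h * real n = 1/2" and a: "0 \<le> a" "a \<le> 1"
  shows "- 16 * (a - 0)^2 \<le> (a - 0)^2 - (sgf h a - 0)^2"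
proof (cases "1/4 \<le> a \<and> a < 3/4")
  case True
  have "0 \<le> sgf h a" "sgf h a \<le> 1" using sgf_range[OF h hn a] by auto
  then have "(sgf h a)^2 \<le> 1" by (simp add: power_le_one)
  moreover have "1 \<le> 16 * a^2"
  proof -
    have "1 \<le> 4 * a" using True by simp
    then have "1 \<le> (4 * a)^2" by (rule one_le_power)
    then show ?thesis by (simp add: power_mult_distrib)
  qed
  ultimately show ?thesis by simp
next
  case False
  then have "sgf h a = a" unfolding sgf_def by presburger
  then show ?thesis by simp
qed



lemma sgf_meas: "sgf h \<in> borel_measurable borel"
  unfolding sgf_def by measurable


lemma alt_sum: "(\<Sum>i\<in>{l..l+k}. (-1::real)^i) = (-1)^l * (if even k then 1 else 0)"
proof (induction k)
  case 0
  then show ?case by simp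
next
  case (Suc k)
  have e: "{l..l + Suc k} = insert (Suc (l + k)) {l..l+k}" by auto
  have "(\<Sum>i\<in>{l..l + Suc k}. (-1::real)^i) = (-1)^(Suc (l+k)) + (\<Sum>i\<in>{l..l+k}. (-1::real)^i)"
    unfolding e by (subst sum.insert) auto
  also have "\<dots> = - ((-1)^l * (-1)^k) + (-1)^l * (if even k then 1 else 0)"
    using Suc by (simp add: power_add)
  also have "\<dots> = (-1)^l * (if even (Suc k) then 1 else 0)"
    by (cases "even k") auto
  finally show ?case .
qed

lemma alt_conv:
  assumes fin: "finite S" and conv: "\<And>i j k. i \<in> S \<Longrightarrow> k \<in> S \<Longrightarrow> i \<le> j \<Longrightarrow> j \<le> k \<Longrightarrow> j \<in> S"
  shows "\<bar>\<Sum>i\<in>S. (-1::real)^i\<bar> \<le> 1"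
proof (cases "S = {}")
  case True
  then show ?thesis by simp
next
  case False
  define l where "l = Min S"
  define u where "u = Max S"
  have lS: "l \<in> S" and uS: "u \<in> S" using fin False by (auto simp: l_def u_def)
  have "S = {l..u}"
  proof
    show "S \<subseteq> {l..u}"
    proof
      fix j assume "j \<in> S"
      then show "j \<in> {l..u}" using Min_le[OF fin] Max_ge[OF fin] by (simp add: l_def u_def)
    qed
    show "{l..u} \<subseteq> S"
    proof
      fix j assume "j \<in> {l..u}"
      then show "j \<in> S" using conv[OF lS uS] by simp
    qed
  qed
  moreover have "l \<le> u" using fin False by (simp add: l_def u_def)
  then have "{l..u} = {l..l + (u - l)}" by simp
  ultimately have "(\<Sum>i\<in>S. (-1::real)^i) = (\<Sum>i\<in>{l..l + (u - l)}. (-1::real)^i)" by simp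
  also have "\<dots> = (-1)^l * (if even (u - l) then 1 else 0)" by (rule alt_sum)
  finally have "(\<Sum>i\<in>S. (-1::real)^i) = (-1)^l * (if even (u - l) then 1 else 0)" .
  then show ?thesis by (simp add: abs_mult)
qed

lemma int_lower:
  fixes G :: "real \<Rightarrow> real"
  assumes r: "valid_response r" and p: "p \<in> {0..1}" and G: "G \<in> borel_measurable borel"
    and Gb: "\<And>a. a \<in> {0..1} \<Longrightarrow> \<bar>G a\<bar> \<le> B"
    and low: "\<And>a. a \<in> {0..1} \<Longrightarrow> c - K * (a - p)^2 \<le> G a"
  shows "c - K * (\<integral>a. (a - p)^2 \<partial>r p) \<le> (\<integral>a. G a \<partial>r p)"
proof -
  interpret prob_space "r p" using r p by (simp add: valid_response_def)
  have sq: "(a - p)^2 \<le> 1" if "a \<in> {0..1}" for a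
  proof -
    have "\<bar>a - p\<bar> \<le> 1" using that p by auto
    then have "\<bar>a - p\<bar>^2 \<le> 1^2" by (rule power_mono) simp
    then show ?thesis by simp
  qed
  have m2: "(\<lambda>a. (a - p)^2) \<in> borel_measurable borel" by measurable
  have i2: "integrable (r p) (\<lambda>a. (a - p)^2)"
    by (rule resp_integrable[OF r p m2, where B=1]) (use sq in auto)
  have "(\<integral>a. c - K * (a - p)^2 \<partial>r p) = c - K * (\<integral>a. (a - p)^2 \<partial>r p)"
    using i2 prob_space by (simp add: Bochner_Integration.integral_diff)
  moreover have "(\<integral>a. c - K * (a - p)^2 \<partial>r p) \<le> (\<integral>a. G a \<partial>r p)"
  proof (rule resp_mono[OF r p G Gb, where B'="\<bar>c\<bar> + \<bar>K\<bar>"])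
    show "(\<lambda>a. c - K * (a - p)^2) \<in> borel_measurable borel" by measurable
    fix a :: real assume a: "a \<in> {0..1}"
    show "c - K * (a - p)^2 \<le> G a" by (rule low[OF a])
    have "\<bar>K * (a - p)^2\<bar> \<le> \<bar>K\<bar> * 1" unfolding abs_mult by (rule mult_left_mono) (use sq[OF a] in auto)
    then show "\<bar>c - K * (a - p)^2\<bar> \<le> \<bar>c\<bar> + \<bar>K\<bar>" by linarith
  qed
  ultimately show ?thesis by simp
qed


lemma caseA:
  fixes t :: real
  assumes r: "valid_response r" and t: "0 < t" "t \<le> 1/40000" and p: "p \<in> {0..1}"
    and big: "t^2/10000 \<le> (\<integral>a. (a - p)^2 \<partial>r p)"
  shows "\<exists>D. valid_dist D \<and> cutoff_err D = t^3 \<and> swap_regret sqU r D \<ge> t^2/40000"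
proof -
  define q0 :: real where "q0 = (if p \<le> 1/2 then 1 else 0)"
  define y0 where "y0 = (\<not> p \<le> 1/2)"
  have q0r: "q0 \<in> {0..1}" by (simp add: q0_def)
  have yq: "\<bar>of_bool y0 - q0\<bar> = 1" by (simp add: q0_def y0_def)
  define e where "e = t^3"
  have e0: "0 < e" using t by (simp add: e_def)
  have et: "e \<le> t^2/40000"
  proof -
    have "t * t^2 \<le> (1/40000) * t^2" by (rule mult_right_mono) (use t in auto)
    then show ?thesis by (simp add: e_def power3_eq_cube power2_eq_square)
  qed
  have t2: "t^2 \<le> 1" using t by (simp add: power_le_one)
  have e1: "e \<le> 1/2" using et t2 by simp
  define D where "D = mkD (1 - e) 1 (\<lambda>_. p) (\<lambda>_. p) (q0, y0)"
  have Dq: "0 \<le> 1 - e" "1 - e \<le> 1" using e0 e1 by auto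
  have mu: "\<And>i. i < (1::nat) \<Longrightarrow> 0 \<le> p \<and> p \<le> 1" using p by auto
  have valid: "valid_dist D"
    unfolding valid_dist_def D_def using mkD_set[of 1 "1 - e" "\<lambda>_. p" "\<lambda>_. p" "(q0, y0)"] p q0r by auto
  have E: "measure_pmf.expectation D (\<lambda>(x,y). (of_bool y - x) * of_bool (a \<le> x \<and> x \<le> b))
      = e * ((of_bool y0 - q0) * of_bool (a \<le> q0 \<and> q0 \<le> b))" for a b
    unfolding D_def by (subst mkD_expect[OF _ Dq mu]) (auto simp: algebra_simps)
  have cut: "cutoff_err D = e"
  proof (rule cutoff_eq[where ?a0.0=q0 and ?b0.0=q0])
    fix a b :: real
    show "\<bar>measure_pmf.expectation D (\<lambda>(x,y). (of_bool y - x) * of_bool (a \<le> x \<and> x \<le> b))\<bar> \<le> e"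
      unfolding E abs_mult using yq e0 by simp
  next
    show "\<bar>measure_pmf.expectation D (\<lambda>(x,y). (of_bool y - x) * of_bool (q0 \<le> x \<and> x \<le> q0))\<bar> = e"
      unfolding E abs_mult using yq e0 by simp
  qed (use q0r in auto)
  have adm: "admissible (\<lambda>_. p)" using p by (simp add: admissible_def)
  have SR: "swap_regret sqU r D \<ge> (1 - e) * (\<Sum>i<(1::nat). \<integral>a. ((a - p)^2 - (p - p)^2) \<partial>(r p)) / real (1::nat)
       + (1 - (1 - e)) * gg (\<lambda>_. p) r (fst (q0, y0)) (snd (q0, y0))"
    unfolding D_def by (rule SR_lower[OF r _ Dq mu]) (use p q0r adm in auto)
  have g: "gg (\<lambda>_. p) r q0 y0 \<ge> -1" by (rule gg_le[OF r q0r adm])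
  have "(1 - e) * (t^2/10000) \<le> (1 - e) * (\<integral>a. (a - p)^2 \<partial>(r p))"
    by (rule mult_left_mono[OF big]) (use e1 in simp)
  moreover have "(1/2) * (t^2/10000) \<le> (1 - e) * (t^2/10000)"
    by (rule mult_right_mono) (use e1 in auto)
  moreover have "e * (-1) \<le> e * gg (\<lambda>_. p) r q0 y0" by (rule mult_left_mono[OF g]) (use e0 in simp)
  ultimately have "swap_regret sqU r D \<ge> t^2/40000"
    using SR et by simp
  then show ?thesis using valid cut unfolding e_def by blast
qed


lemma caseB:
  fixes t :: real
  assumes r: "valid_response r" and t: "0 < t" "t \<le> 1/1000"
    and small: "\<And>p. p \<in> {0..1} \<Longrightarrow> (\<integral>a. (a - p)^2 \<partial>r p) < t^2/10000"
  shows "\<exists>D. valid_dist D \<and> cutoff_err D = t^3 \<and> swap_regret sqU r D \<ge> t^2/40"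
proof -
  define n where "n = nat \<lfloor>1/t\<rfloor>"
  have it: "0 \<le> 1/t" using t by simp
  have nle: "real n \<le> 1/t" and ngt: "1/t < real n + 1" using floor_facts[OF it] by (simp_all add: n_def)
  have big: "1000 \<le> 1/t" using t by (simp add: field_simps)
  have n0: "0 < n" using ngt big by linarith
  have tn: "t * real n \<le> 1" using nle t by (simp add: field_simps)
  have tn2: "1/2 \<le> t * real n"
  proof -
    have "1 < t * (real n + 1)" using ngt t by (simp add: field_simps)
    then show ?thesis using t by (simp add: algebra_simps)
  qed
  define h where "h = 1 / (2 * real n)"
  have h0: "0 < h" using n0 by (simp add: h_def)
  have hn: "h * real n = 1/2" using n0 by (simp add: h_def)
  have h1: "h \<le> 1" using n0 by (simp add: h_def)
  have th: "t \<le> 2 * h" using tn n0 by (simp add: h_def field_simps)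
  define q where "q = 4 * t^3 * real n"
  have qeq: "q = 4 * t^2 * (t * real n)" by (simp add: q_def power3_eq_cube power2_eq_square)
  have t2: "t^2 \<le> 1/1000000" 
  proof -
    have "t^2 \<le> (1/1000)^2" by (rule power_mono[OF t(2)]) (use t in simp)
    then show ?thesis by (simp add: power2_eq_square)
  qed
  have q0: "0 \<le> q" using t by (simp add: q_def)
  have q1: "q \<le> 1"
  proof -
    have "4 * t^2 * (t * real n) \<le> 4 * t^2 * 1" by (rule mult_left_mono[OF tn]) simp
    then show ?thesis using qeq t2 by simp
  qed
  have q2: "2 * t^2 \<le> q"
  proof -
    have "4 * t^2 * (1/2) \<le> 4 * t^2 * (t * real n)" by (rule mult_left_mono[OF tn2]) simp
    then show ?thesis using qeq by simp
  qed
  have mu: "\<And>i. i < n \<Longrightarrow> 0 \<le> muf h i \<and> muf h i \<le> 1" using muf_range[OF h0 hn] by blast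
  have pt: "\<And>i. i < n \<Longrightarrow> ptf h i \<in> {0..1}"
  proof -
    fix i assume i: "i < n"
    show "ptf h i \<in> {0..1}" using ptf_range[OF h0 hn i] h0 by auto
  qed
  define D where "D = mkD q n (ptf h) (muf h) (0, False)"
  have valid: "valid_dist D"
    unfolding valid_dist_def D_def using mkD_set[OF n0, of q "ptf h" "muf h" "(0, False)"] pt by force
  have E: "measure_pmf.expectation D (\<lambda>(x,y). (of_bool y - x) * of_bool (a \<le> x \<and> x \<le> b))
      = t^3 * (\<Sum>i<n. (-1)^i * of_bool (a \<le> ptf h i \<and> ptf h i \<le> b))" for a b
  proof -
    have "measure_pmf.expectation D (\<lambda>(x,y). (of_bool y - x) * of_bool (a \<le> x \<and> x \<le> b))
      = q * (\<Sum>i<n. muf h i * ((1 - ptf h i) * of_bool (a \<le> ptf h i \<and> ptf h i \<le> b))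
            + (1 - muf h i) * ((0 - ptf h i) * of_bool (a \<le> ptf h i \<and> ptf h i \<le> b))) / real n
         + (1 - q) * ((0 - 0) * of_bool (a \<le> 0 \<and> 0 \<le> b))"
      unfolding D_def by (subst mkD_expect[OF n0 q0 q1 mu]) auto
    also have "\<dots> = q * (\<Sum>i<n. (-1)^i * of_bool (a \<le> ptf h i \<and> ptf h i \<le> b) / 4) / real n"
      by (simp add: muf_def algebra_simps)
    also have "\<dots> = q * ((\<Sum>i<n. (-1)^i * of_bool (a \<le> ptf h i \<and> ptf h i \<le> b)) / 4) / real n"
      by (simp only: sum_divide_distrib)
    also have "\<dots> = q / (4 * real n) * (\<Sum>i<n. (-1)^i * of_bool (a \<le> ptf h i \<and> ptf h i \<le> b))"
      by (simp add: field_simps)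
    also have "q / (4 * real n) = t^3" using n0 by (simp add: q_def)
    finally show ?thesis .
  qed
  have mono: "ptf h i \<le> ptf h j" if "i \<le> j" for i j
    using that h0 by (simp add: ptf_def mult_right_mono)
  have cut: "cutoff_err D = t^3"
  proof (rule cutoff_eq[where ?a0.0="ptf h 0" and ?b0.0="ptf h 0"])
    fix a b :: real
    let ?S = "{i \<in> {..<n}. a \<le> ptf h i \<and> ptf h i \<le> b}"
    have "(\<Sum>i<n. (-1::real)^i * of_bool (a \<le> ptf h i \<and> ptf h i \<le> b))
        = (\<Sum>i\<in>{..<n}. if a \<le> ptf h i \<and> ptf h i \<le> b then (-1::real)^i else 0)"
      by (rule sum.cong) auto
    also have "\<dots> = (\<Sum>i\<in>?S. (-1)^i)"
      by (rule sum.inter_filter[symmetric]) simp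
    finally have "(\<Sum>i<n. (-1::real)^i * of_bool (a \<le> ptf h i \<and> ptf h i \<le> b)) = (\<Sum>i\<in>?S. (-1)^i)" .
    moreover have "\<bar>\<Sum>i\<in>?S. (-1::real)^i\<bar> \<le> 1"
    proof (rule alt_conv)
      show "finite ?S" by simp
      fix i j k assume "i \<in> ?S" "k \<in> ?S" "i \<le> j" "j \<le> k"
      then show "j \<in> ?S" using mono[of i j] mono[of j k] by auto
    qed
    ultimately show "\<bar>measure_pmf.expectation D (\<lambda>(x,y). (of_bool y - x) * of_bool (a \<le> x \<and> x \<le> b))\<bar> \<le> t^3"
      unfolding E abs_mult using t by (simp add: mult_le_cancel_left1)
  next
    have inj: "(ptf h 0 \<le> ptf h i \<and> ptf h i \<le> ptf h 0) \<longleftrightarrow> i = 0" for i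
      using h0 by (auto simp: ptf_def)
    have "(\<Sum>i<n. (-1::real)^i * of_bool (ptf h 0 \<le> ptf h i \<and> ptf h i \<le> ptf h 0)) = 1"
      unfolding inj
    proof -
      have "(\<Sum>i<n. (-1::real)^i * of_bool (i = 0)) = (\<Sum>i\<in>{..<n}. if i = 0 then 1 else 0)"
        by (rule sum.cong) auto
      also have "\<dots> = 1" using n0 by (subst sum.delta) auto
      finally show "(\<Sum>i<n. (-1::real)^i * of_bool (i = 0)) = 1" .
    qed
    then show "\<bar>measure_pmf.expectation D (\<lambda>(x,y). (of_bool y - x) * of_bool (ptf h 0 \<le> x \<and> x \<le> ptf h 0))\<bar> = t^3"
      unfolding E using t by simp
  qed (use pt[OF n0] in auto)
  have adm: "admissible (sgf h)" using sgf_meas sgf_range[OF h0 hn] by (auto simp: admissible_def)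
  have SR: "swap_regret sqU r D \<ge> q * (\<Sum>i<n. \<integral>a. ((a - muf h i)^2 - (sgf h a - muf h i)^2) \<partial>(r (ptf h i))) / n
       + (1 - q) * gg (sgf h) r (fst (0::real, False)) (snd (0::real, False))"
    unfolding D_def by (rule SR_lower[OF r n0 q0 q1 mu pt]) (use adm in auto)
  have Gi: "1/40 \<le> (\<integral>a. ((a - muf h i)^2 - (sgf h a - muf h i)^2) \<partial>(r (ptf h i)))" if i: "i < n" for i
  proof -
    have "1/32 - 5 / h^2 * (\<integral>a. (a - ptf h i)^2 \<partial>r (ptf h i))
        \<le> (\<integral>a. ((a - muf h i)^2 - (sgf h a - muf h i)^2) \<partial>(r (ptf h i)))"
    proof (rule int_lower[OF r pt[OF i], where B=1])
      show "(\<lambda>a. (a - muf h i)^2 - (sgf h a - muf h i)^2) \<in> borel_measurable borel"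
        using sgf_meas by measurable
      fix a :: real assume a: "a \<in> {0..1}"
      show "1/32 - 5 / h^2 * (a - ptf h i)^2 \<le> (a - muf h i)^2 - (sgf h a - muf h i)^2"
        using gain_i[OF h0 h1 hn i] a by auto
      have "0 \<le> sgf h a" "sgf h a \<le> 1" using sgf_range[OF h0 hn] a by auto
      moreover have "0 \<le> muf h i" "muf h i \<le> 1" using mu[OF i] by auto
      ultimately have "\<bar>(a - muf h i)^2 - (sgf h a - muf h i)^2\<bar> \<le> 1"
        using a L1[of "\<bar>a - muf h i\<bar>" "\<bar>sgf h a - muf h i\<bar>"] by (simp add: power2_eq_square abs_le_iff)
      then show "\<bar>(a - muf h i)^2 - (sgf h a - muf h i)^2\<bar> \<le> 1" .
    qed
    moreover have "5 / h^2 * (\<integral>a. (a - ptf h i)^2 \<partial>r (ptf h i)) \<le> 5 / h^2 * (t^2/10000)"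
      by (rule mult_left_mono) (use small[OF pt[OF i]] in auto)
    moreover have "5 / h^2 * (t^2/10000) \<le> 1/32 - 1/40"
    proof -
      have "t^2 \<le> (2*h)^2" by (rule power_mono[OF th]) (use t in simp)
      then have "t^2 \<le> 4 * h^2" by (simp add: power_mult_distrib)
      moreover have "0 \<le> h^2" by simp
      ultimately have A: "2 * t^2 \<le> h^2 * 25" by linarith
      show ?thesis using A h0 by (simp add: field_simps)
    qed
    ultimately show ?thesis by linarith
  qed
  have G0: "- 16 * (t^2/10000) \<le> gg (sgf h) r 0 False"
  proof -
    have z: "(0::real) \<in> {0..1}" by simp
    have "gg (sgf h) r 0 False = (\<integral>a. ((a - 0)^2 - (sgf h a - 0)^2) \<partial>(r 0))"
      using gg_pair[OF r z adm, of 0] by simp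
    moreover have "0 - 16 * (\<integral>a. (a - 0)^2 \<partial>r 0) \<le> (\<integral>a. ((a - 0)^2 - (sgf h a - 0)^2) \<partial>(r 0))"
    proof (rule int_lower[OF r z, where B=1])
      show "(\<lambda>a. (a - 0)^2 - (sgf h a - 0)^2) \<in> borel_measurable borel"
        using sgf_meas by measurable
      fix a :: real assume a: "a \<in> {0..1}"
      show "0 - 16 * (a - 0)^2 \<le> (a - 0)^2 - (sgf h a - 0)^2"
        using gain_0[OF h0 hn] a by auto
      have "0 \<le> sgf h a" "sgf h a \<le> 1" using sgf_range[OF h0 hn] a by auto
      then show "\<bar>(a - 0)^2 - (sgf h a - 0)^2\<bar> \<le> 1"
        using a L1[of a "sgf h a"] by (simp add: power2_eq_square)
    qed
    moreover have "16 * (\<integral>a. (a - 0)^2 \<partial>r 0) \<le> 16 * (t^2/10000)"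
      using small[OF z] by simp
    ultimately show ?thesis by linarith
  qed
  have S1: "real n * (1/40) \<le> (\<Sum>i<n. \<integral>a. ((a - muf h i)^2 - (sgf h a - muf h i)^2) \<partial>(r (ptf h i)))"
    using sum_mono[of "{..<n}" "\<lambda>_. 1/40" "\<lambda>i. \<integral>a. ((a - muf h i)^2 - (sgf h a - muf h i)^2) \<partial>(r (ptf h i))"] Gi
    by simp
  have S2: "q / 40 \<le> q * (\<Sum>i<n. \<integral>a. ((a - muf h i)^2 - (sgf h a - muf h i)^2) \<partial>(r (ptf h i))) / n"
  proof -
    have "q * (real n * (1/40)) \<le> q * (\<Sum>i<n. \<integral>a. ((a - muf h i)^2 - (sgf h a - muf h i)^2) \<partial>(r (ptf h i)))"
      by (rule mult_left_mono[OF S1 q0])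
    then show ?thesis using n0 by (simp add: field_simps)
  qed
  have S3: "(1 - q) * (- 16 * (t^2/10000)) \<le> (1 - q) * gg (sgf h) r 0 False"
    by (rule mult_left_mono[OF G0]) (use q1 in simp)
  have S4: "- 16 * (t^2/10000) \<le> (1 - q) * (- 16 * (t^2/10000))"
    using q0 q1 by (simp add: mult_le_cancel_right1 algebra_simps)
  have SR': "swap_regret sqU r D \<ge> q * (\<Sum>i<n. \<integral>a. ((a - muf h i)^2 - (sgf h a - muf h i)^2) \<partial>(r (ptf h i))) / n
       + (1 - q) * gg (sgf h) r 0 False" using SR by simp
  have "t^2/40 \<le> swap_regret sqU r D"
    using SR' S2 S3 S4 q2 zero_le_power2[of t] by linarith
  then show ?thesis using valid cut by blast
qed


theorem theoremB1:
  shows "\<exists>c::real. c > 0 \<and>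
    (\<forall>\<epsilon>::real. 0 < \<epsilon> \<and> \<epsilon> < 10 powr (-100) \<longrightarrow>
      (\<forall>r. valid_response r \<longrightarrow>
        (\<exists>D. valid_dist D \<and> cutoff_err D = \<epsilon> \<and>
             swap_regret sqU r D \<ge> c * \<epsilon> powr (2/3))))"
proof (intro exI[of _ "1/40000"] conjI allI impI)
  show "(0::real) < 1/40000" by simp
  fix \<epsilon> :: real and r
  assume e: "0 < \<epsilon> \<and> \<epsilon> < 10 powr (-100)" and r: "valid_response r"
  define t where "t = \<epsilon> powr (1/3)"
  have t0: "0 < t" using e by (simp add: t_def)
  have t3: "t^3 = \<epsilon>"
  proof -
    have "t^3 = t powr (real 3)" using t0 by (simp add: powr_realpow)
    also have "\<dots> = \<epsilon> powr (1/3 * 3)" unfolding t_def by (simp add: powr_powr)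
    finally show ?thesis using e by simp
  qed
  have t2: "t^2 = \<epsilon> powr (2/3)"
  proof -
    have "t^2 = t powr (real 2)" using t0 by (simp add: powr_realpow)
    also have "\<dots> = \<epsilon> powr (1/3 * 2)" unfolding t_def by (simp add: powr_powr)
    finally show ?thesis by simp
  qed
  have small: "t \<le> 1/40000"
  proof (rule ccontr)
    assume "\<not> t \<le> 1/40000"
    then have "1/40000 \<le> t" by simp
    then have "(1/40000)^3 \<le> t^3" by (rule power_mono) simp
    moreover have "(10::real) powr (-100) = 1 / 10^100"
      by (simp add: powr_minus_divide powr_realpow[symmetric])
    moreover have "(1::real) / 10^100 \<le> (1/40000)^3" by (simp add: power_divide divide_le_eq le_divide_eq)
    ultimately show False using e t3 by linarith
  qed
  show "\<exists>D. valid_dist D \<and> cutoff_err D = \<epsilon> \<and> 1/40000 * \<epsilon> powr (2/3) \<le> swap_regret sqU r D"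
  proof (cases "\<exists>p\<in>{0..1}. t^2/10000 \<le> (\<integral>a. (a - p)^2 \<partial>r p)")
    case True
    then obtain p where p: "p \<in> {0..1}" "t^2/10000 \<le> (\<integral>a. (a - p)^2 \<partial>r p)" by blast
    from caseA[OF r t0 small p] show ?thesis unfolding t3 t2 by simp
  next
    case False
    then have s: "\<And>p. p \<in> {0..1} \<Longrightarrow> (\<integral>a. (a - p)^2 \<partial>r p) < t^2/10000" by force
    have "t \<le> 1/1000" using small by simp
    from caseB[OF r t0 this s] obtain D where D: "valid_dist D" "cutoff_err D = t^3" "t^2/40 \<le> swap_regret sqU r D" by blast
    have "1/40000 * t^2 \<le> t^2/40" by simp
    then have "1/40000 * \<epsilon> powr (2/3) \<le> swap_regret sqU r D" using D(3) unfolding t2 by linarith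
    moreover have "cutoff_err D = \<epsilon>" using D(2) t3 by simp
    ultimately show ?thesis using D(1) by blast
  qed
qed


end
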